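(* Let $G$ be a Polish group, $d$, $G_0$, $\mathcal L(G,d)$ and $X\subseteq \mathcal L(G,d)^{\mathbb Q^{<\mathbb N}}$ as in the context. Then $X$ is invariant under the action of $G$: if $\vec f\in X$ and $g\in G$ then $g\cdot\vec f\in X$.
   Context: Let $G$ be a Polish group, $d$ a compatible right-invariant metric on $G$ (i.e. $d(g_0h,g_1h)=d(g_0,g_1)$) bounded by $1$, and $G_0$ a countable dense subgroup of $G$. Let $\mathcal L(G,d)$ be the set of functions $f:G\to[0,1]$ with $|f(g_1)-f(g_2)|\le d(g_1,g_2)$ for all $g_1,g_2$. Let $\mathbb Q^{<\mathbb N}$ be the set of finite sequences of rationals; for $s\in\mathbb Q^{<\mathbb N}$ and rationals $a_1,\dots,a_k$, $sa_1\dots a_k$ denotes the sequence $s$ followed by $a_1,\dots,a_k$ (natural numbers are regarded as rationals). Elements of $\mathcal L(G,d)^{\mathbb Q^{<\mathbb N}}$ are families $\vec f=(f_s)_{s\in\mathbb Q^{<\mathbb N}}$, and $G$ acts by $(g\cdot\vec f)_s(g_0)=f_s(g_0g)$. Let $X$ be the set of $\vec f\in\mathcal L(G,d)^{\mathbb Q^{<\mathbb N}}$ such that, writing $t=sq_0q_1q_2\,0\,m\,n$ and $u=sq_0q_1q_2\,1\,m\,n$: (1) for all $s\in\mathbb Q^{<\mathbb N}$, $g_0\in G_0$, $m,n\in\mathbb N$, $q_0,q_1,q_2,\epsilon\in\mathbb Q\cap(0,1)$ with $0<q_i\pm\epsilon<1$ ($i=0,1,2$): $f_t(g_0)<q_1-\epsilon$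 or $f_s(g_0)\le q_0+\epsilon$; (2) for the same range of parameters: $f_u(g_0)\ge q_2+\epsilon$ or $f_t(g_0)\ge q_1-\epsilon$; (3) for all $s\in\mathbb Q^{<\mathbb N}$, $g_0\in G_0$, $q_0,\epsilon\in\mathbb Q\cap(0,1)$: if $f_s(g_0)<q_0$ then there are $q_1,q_2\in\mathbb Q$, $g_1\in G_0$, $m,n\in\mathbb N$ with $0<q_2<q_1<q_0<1$, $d(g_0,g_1)<\epsilon$, and $f_u(g_1)<q_2$ where $u=sq_0q_1q_2\,1\,m\,n$. *)

theory Defs
  imports "HOL-Analysis.Analysis" "HOL-Algebra.Group"
begin

definition Polish_group_metric :: "('a, 'b) monoid_scheme \<Rightarrow> ('a \<Rightarrow> 'a \<Rightarrow> real) \<Rightarrow> bool" where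
  "Polish_group_metric G d \<longleftrightarrow>
     group G \<and> Metric_space (carrier G) d \<and>
     (let T = Metric_space.mtopology (carrier G) d in
        separable_space T \<and> completely_metrizable_space T \<and>
        continuous_map (prod_topology T T) T (\<lambda>(x, y). x \<otimes>\<^bsub>G\<^esub> y) \<and>
        continuous_map T T (\<lambda>x. inv\<^bsub>G\<^esub> x))"

definition right_invariant :: "('a, 'b) monoid_scheme \<Rightarrow> ('a \<Rightarrow> 'a \<Rightarrow> real) \<Rightarrow> bool" where
  "right_invariant G d \<longleftrightarrow>
     (\<forall>g0\<in>carrier G. \<forall>g1\<in>carrier G. \<forall>h\<in>carrier G.
        d (g0 \<otimes>\<^bsub>G\<^esub> h) (g1 \<otimes>\<^bsub>G\<^esub> h) = d g0 g1)"

definition bounded_by_one :: "('a, 'b) monoid_scheme \<Rightarrow> ('a \<Rightarrow> 'a \<Rightarrow> real) \<Rightarrow> bool" where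
  "bounded_by_one G d \<longleftrightarrow> (\<forall>x\<in>carrier G. \<forall>y\<in>carrier G. d x y \<le> 1)"

definition countable_dense_subgroup ::
  "('a, 'b) monoid_scheme \<Rightarrow> ('a \<Rightarrow> 'a \<Rightarrow> real) \<Rightarrow> 'a set \<Rightarrow> bool" where
  "countable_dense_subgroup G d G0 \<longleftrightarrow>
     subgroup G0 G \<and> countable G0 \<and>
     (Metric_space.mtopology (carrier G) d) closure_of G0 = carrier G"

text \<open>\<open>\<L>(G,d)\<close>: 1-Lipschitz functions G \<rightarrow> [0,1] (only values on the carrier matter).\<close>
definition Lip1 :: "('a, 'b) monoid_scheme \<Rightarrow> ('a \<Rightarrow> 'a \<Rightarrow> real) \<Rightarrow> ('a \<Rightarrow> real) \<Rightarrow> bool" where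
  "Lip1 G d f \<longleftrightarrow>
     (\<forall>x\<in>carrier G. 0 \<le> f x \<and> f x \<le> 1) \<and>
     (\<forall>x\<in>carrier G. \<forall>y\<in>carrier G. \<bar>f x - f y\<bar> \<le> d x y)"

definition gact :: "('a, 'b) monoid_scheme \<Rightarrow> 'a \<Rightarrow> (rat list \<Rightarrow> 'a \<Rightarrow> real) \<Rightarrow> (rat list \<Rightarrow> 'a \<Rightarrow> real)" where
  "gact G g F = (\<lambda>s x. F s (x \<otimes>\<^bsub>G\<^esub> g))"

definition Xset :: "('a, 'b) monoid_scheme \<Rightarrow> ('a \<Rightarrow> 'a \<Rightarrow> real) \<Rightarrow> 'a set \<Rightarrow> (rat list \<Rightarrow> 'a \<Rightarrow> real) set" where
  "Xset G d G0 = {F.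
     (\<forall>s. Lip1 G d (F s)) \<and>
     (\<forall>s. \<forall>g0\<in>G0. \<forall>m n :: nat. \<forall>q0 q1 q2 \<epsilon> :: rat.
        q0 \<in> {0<..<1} \<and> q1 \<in> {0<..<1} \<and> q2 \<in> {0<..<1} \<and> \<epsilon> \<in> {0<..<1} \<and>
        (\<forall>q\<in>{q0, q1, q2}. 0 < q - \<epsilon> \<and> q - \<epsilon> < 1 \<and> 0 < q + \<epsilon> \<and> q + \<epsilon> < 1) \<longrightarrow>
          (F (s @ [q0, q1, q2, 0, of_nat m, of_nat n]) g0 < of_rat (q1 - \<epsilon>) \<or>
           F s g0 \<le> of_rat (q0 + \<epsilon>))) \<and>
     (\<forall>s. \<forall>g0\<in>G0. \<forall>m n :: nat. \<forall>q0 q1 q2 \<epsilon> :: rat.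
        q0 \<in> {0<..<1} \<and> q1 \<in> {0<..<1} \<and> q2 \<in> {0<..<1} \<and> \<epsilon> \<in> {0<..<1} \<and>
        (\<forall>q\<in>{q0, q1, q2}. 0 < q - \<epsilon> \<and> q - \<epsilon> < 1 \<and> 0 < q + \<epsilon> \<and> q + \<epsilon> < 1) \<longrightarrow>
          (F (s @ [q0, q1, q2, 1, of_nat m, of_nat n]) g0 \<ge> of_rat (q2 + \<epsilon>) \<or>
           F (s @ [q0, q1, q2, 0, of_nat m, of_nat n]) g0 \<ge> of_rat (q1 - \<epsilon>))) \<and>
     (\<forall>s. \<forall>g0\<in>G0. \<forall>q0 \<epsilon> :: rat.
        q0 \<in> {0<..<1} \<and> \<epsilon> \<in> {0<..<1} \<and> F s g0 < of_rat q0 \<longrightarrow>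
          (\<exists>q1 q2 :: rat. \<exists>g1\<in>G0. \<exists>m n :: nat.
             0 < q2 \<and> q2 < q1 \<and> q1 < q0 \<and> q0 < 1 \<and> d g0 g1 < of_rat \<epsilon> \<and>
             F (s @ [q0, q1, q2, 1, of_nat m, of_nat n]) g1 < of_rat q2))}"

end

theory Submission
  imports Defs
begin

lemma dense_G0:
  assumes "countable_dense_subgroup G d G0" "Metric_space (carrier G) d"
    and "h \<in> carrier G" "r > 0"
  shows "\<exists>h'\<in>G0. d h h' < r"
proof -
  have "h \<in> Metric_space.mtopology (carrier G) d closure_of G0"
    using assms(1,3) unfolding countable_dense_subgroup_def by simp
  then have "\<forall>r>0. \<exists>y\<in>G0. y \<in> Metric_space.mball (carrier G) d h r"
    using Metric_space.metric_closure_of[OF assms(2)] by blast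
  then obtain y where "y \<in> G0" "y \<in> Metric_space.mball (carrier G) d h r"
    using assms(4) by blast
  then show ?thesis using Metric_space.in_mball[OF assms(2)] by blast
qed

lemma small_rat:
  fixes a :: real and b :: rat
  assumes "a > 0" "b > 0"
  shows "\<exists>e::rat. 0 < e \<and> of_rat e < a \<and> e < b"
proof -
  obtain e1 :: rat where "0 < (of_rat e1::real)" "of_rat e1 < a"
    using of_rat_dense[OF assms(1)] by blast
  then have "0 < e1" by simp
  show ?thesis
    apply (rule exI[of _ "min e1 (b/2)"])
  proof -
    have "(of_rat (min e1 (b/2)) :: real) \<le> of_rat e1" by (simp add: of_rat_less_eq)
    then show "0 < min e1 (b/2) \<and> of_rat (min e1 (b/2)) < a \<and> min e1 (b/2) < b"
      using \<open>0 < e1\<close> \<open>of_rat e1 < a\<close> assms by auto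
  qed
qed

theorem lemma2p2:
  fixes G :: "('a, 'b) monoid_scheme" and d :: "'a \<Rightarrow> 'a \<Rightarrow> real" and G0 :: "'a set"
  assumes "Polish_group_metric G d"
    and "right_invariant G d"
    and "bounded_by_one G d"
    and "countable_dense_subgroup G d G0"
    and "F \<in> Xset G d G0"
    and "g \<in> carrier G"
  shows "gact G g F \<in> Xset G d G0"
proof -
  have grp: "group G" and MS: "Metric_space (carrier G) d"
    using assms(1) unfolding Polish_group_metric_def by auto
  have sub: "G0 \<subseteq> carrier G"
    using assms(4) unfolding countable_dense_subgroup_def by (auto dest: subgroup.subset)
  have mc: "\<And>x. x \<in> carrier G \<Longrightarrow> x \<otimes>\<^bsub>G\<^esub> g \<in> carrier G"
    using grp assms(6) by (simp add: group.is_monoid monoid.m_closed)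
  have RI: "\<And>x y. x \<in> carrier G \<Longrightarrow> y \<in> carrier G \<Longrightarrow> d (x \<otimes>\<^bsub>G\<^esub> g) (y \<otimes>\<^bsub>G\<^esub> g) = d x y"
    using assms(2,6) unfolding right_invariant_def by blast
  have dens: "\<And>h r. h \<in> carrier G \<Longrightarrow> r > 0 \<Longrightarrow> \<exists>h'\<in>G0. d h h' < r"
    using dense_G0[OF assms(4) MS] by blast
  have XF: "F \<in> Xset G d G0" by fact
  have L: "\<And>s. Lip1 G d (F s)" using XF by (simp add: Xset_def)
  have
    P1: "\<And>s g0 m n q0 q1 q2 \<epsilon>. g0 \<in> G0 \<Longrightarrow> q0 \<in> {0<..<1} \<and> q1 \<in> {0<..<1} \<and> q2 \<in> {0<..<1} \<and> \<epsilon> \<in> {0<..<1} \<and>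
        (\<forall>q\<in>{q0, q1, q2}. 0 < q - \<epsilon> \<and> q - \<epsilon> < 1 \<and> 0 < q + \<epsilon> \<and> q + \<epsilon> < 1) \<Longrightarrow>
          (F (s @ [q0, q1, q2, 0, of_nat m, of_nat n]) g0 < of_rat (q1 - \<epsilon>) \<or>
           F s g0 \<le> of_rat (q0 + \<epsilon>))"
    using XF unfolding Xset_def mem_Collect_eq by blast
  have P2: "\<And>s g0 m n q0 q1 q2 \<epsilon>. g0 \<in> G0 \<Longrightarrow> q0 \<in> {0<..<1} \<and> q1 \<in> {0<..<1} \<and> q2 \<in> {0<..<1} \<and> \<epsilon> \<in> {0<..<1} \<and>
        (\<forall>q\<in>{q0, q1, q2}. 0 < q - \<epsilon> \<and> q - \<epsilon> < 1 \<and> 0 < q + \<epsilon> \<and> q + \<epsilon> < 1) \<Longrightarrow>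
          (F (s @ [q0, q1, q2, 1, of_nat m, of_nat n]) g0 \<ge> of_rat (q2 + \<epsilon>) \<or>
           F (s @ [q0, q1, q2, 0, of_nat m, of_nat n]) g0 \<ge> of_rat (q1 - \<epsilon>))"
    using XF unfolding Xset_def mem_Collect_eq by blast
  have P3: "\<And>s g0 q0 \<epsilon>. g0 \<in> G0 \<Longrightarrow>
        q0 \<in> {0<..<1} \<and> \<epsilon> \<in> {0<..<1} \<and> F s g0 < of_rat q0 \<Longrightarrow>
          (\<exists>q1 q2 :: rat. \<exists>g1\<in>G0. \<exists>m n :: nat.
             0 < q2 \<and> q2 < q1 \<and> q1 < q0 \<and> q0 < 1 \<and> d g0 g1 < of_rat \<epsilon> \<and>
             F (s @ [q0, q1, q2, 1, of_nat m, of_nat n]) g1 < of_rat q2)"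
    using XF unfolding Xset_def mem_Collect_eq by blast
  have Lv: "\<And>s x y. x \<in> carrier G \<Longrightarrow> y \<in> carrier G \<Longrightarrow> \<bar>F s x - F s y\<bar> \<le> d x y"
    using L unfolding Lip1_def by blast
  have A0: "\<forall>s. Lip1 G d (gact G g F s)"
    unfolding Lip1_def gact_def using L mc RI Lv unfolding Lip1_def by metis
  have A1: "\<forall>s. \<forall>g0\<in>G0. \<forall>m n :: nat. \<forall>q0 q1 q2 \<epsilon> :: rat.
        q0 \<in> {0<..<1} \<and> q1 \<in> {0<..<1} \<and> q2 \<in> {0<..<1} \<and> \<epsilon> \<in> {0<..<1} \<and>
        (\<forall>q\<in>{q0, q1, q2}. 0 < q - \<epsilon> \<and> q - \<epsilon> < 1 \<and> 0 < q + \<epsilon> \<and> q + \<epsilon> < 1) \<longrightarrow>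
          (gact G g F (s @ [q0, q1, q2, 0, of_nat m, of_nat n]) g0 < of_rat (q1 - \<epsilon>) \<or>
           gact G g F s g0 \<le> of_rat (q0 + \<epsilon>))"
  proof (intro allI ballI impI)
    fix s g0 m n q0 q1 q2 \<epsilon>
    assume g0: "g0 \<in> G0" and adm: "q0 \<in> {0<..<1::rat} \<and> q1 \<in> {0<..<1} \<and> q2 \<in> {0<..<1} \<and> \<epsilon> \<in> {0<..<1} \<and>
        (\<forall>q\<in>{q0, q1, q2}. 0 < q - \<epsilon> \<and> q - \<epsilon> < 1 \<and> 0 < q + \<epsilon> \<and> q + \<epsilon> < 1)"
    define t where "t = s @ [q0, q1, q2, 0, of_nat m, of_nat n]"
    define h where "h = g0 \<otimes>\<^bsub>G\<^esub> g"
    have h: "h \<in> carrier G" using g0 sub mc h_def by auto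
    show "gact G g F t g0 < of_rat (q1 - \<epsilon>) \<or> gact G g F s g0 \<le> of_rat (q0 + \<epsilon>)"
    proof (rule ccontr)
      assume "\<not> ?thesis"
      then have c1: "F t h \<ge> of_rat (q1 - \<epsilon>)" and c2: "F s h > of_rat (q0 + \<epsilon>)"
        unfolding gact_def h_def by auto
      define sl where "sl = min (min (min (q0 - \<epsilon>) (q1 - \<epsilon>)) (q2 - \<epsilon>))
                                (min (min (1 - q0 - \<epsilon>) (1 - q1 - \<epsilon>)) (1 - q2 - \<epsilon>))"
      have sl: "sl > 0" using adm unfolding sl_def by auto
      obtain \<eta> where eta: "0 < \<eta>" "of_rat \<eta> < (F s h - of_rat (q0 + \<epsilon>)) / 2" "\<eta> < sl"
        using small_rat[of "(F s h - of_rat (q0 + \<epsilon>)) / 2" sl] c2 sl by auto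
      obtain h' where h': "h' \<in> G0" "d h h' < of_rat \<eta>"
        using dens[OF h, of "of_rat \<eta>"] eta(1) by auto
      have h'c: "h' \<in> carrier G" using h' sub by auto
      have adm': "q0 \<in> {0<..<1::rat} \<and> q1 \<in> {0<..<1} \<and> q2 \<in> {0<..<1} \<and> \<epsilon> + \<eta> \<in> {0<..<1} \<and>
        (\<forall>q\<in>{q0, q1, q2}. 0 < q - (\<epsilon> + \<eta>) \<and> q - (\<epsilon> + \<eta>) < 1 \<and> 0 < q + (\<epsilon> + \<eta>) \<and> q + (\<epsilon> + \<eta>) < 1)"
        using adm eta(1,3) unfolding sl_def by auto
      from P1[OF h'(1) adm', of s m n] have
        "F t h' < of_rat (q1 - (\<epsilon> + \<eta>)) \<or> F s h' \<le> of_rat (q0 + (\<epsilon> + \<eta>))"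
        unfolding t_def .
      moreover have "\<bar>F t h - F t h'\<bar> \<le> d h h'" "\<bar>F s h - F s h'\<bar> \<le> d h h'"
        using Lv h h'c by auto
      ultimately show False using c1 c2 eta h'(2)
        by (auto simp: of_rat_add of_rat_diff)
    qed
  qed
  have A2: "\<forall>s. \<forall>g0\<in>G0. \<forall>m n :: nat. \<forall>q0 q1 q2 \<epsilon> :: rat.
        q0 \<in> {0<..<1} \<and> q1 \<in> {0<..<1} \<and> q2 \<in> {0<..<1} \<and> \<epsilon> \<in> {0<..<1} \<and>
        (\<forall>q\<in>{q0, q1, q2}. 0 < q - \<epsilon> \<and> q - \<epsilon> < 1 \<and> 0 < q + \<epsilon> \<and> q + \<epsilon> < 1) \<longrightarrow>
          (gact G g F (s @ [q0, q1, q2, 1, of_nat m, of_nat n]) g0 \<ge> of_rat (q2 + \<epsilon>) \<or>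
           gact G g F (s @ [q0, q1, q2, 0, of_nat m, of_nat n]) g0 \<ge> of_rat (q1 - \<epsilon>))"
  proof (intro allI ballI impI)
    fix s g0 m n q0 q1 q2 \<epsilon>
    assume g0: "g0 \<in> G0" and adm: "q0 \<in> {0<..<1::rat} \<and> q1 \<in> {0<..<1} \<and> q2 \<in> {0<..<1} \<and> \<epsilon> \<in> {0<..<1} \<and>
        (\<forall>q\<in>{q0, q1, q2}. 0 < q - \<epsilon> \<and> q - \<epsilon> < 1 \<and> 0 < q + \<epsilon> \<and> q + \<epsilon> < 1)"
    define t where "t = s @ [q0, q1, q2, 0, of_nat m, of_nat n]"
    define u where "u = s @ [q0, q1, q2, 1, of_nat m, of_nat n]"
    define h where "h = g0 \<otimes>\<^bsub>G\<^esub> g"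
    have h: "h \<in> carrier G" using g0 sub mc h_def by auto
    show "gact G g F u g0 \<ge> of_rat (q2 + \<epsilon>) \<or> gact G g F t g0 \<ge> of_rat (q1 - \<epsilon>)"
    proof (rule ccontr)
      assume "\<not> ?thesis"
      then have c1: "F u h < of_rat (q2 + \<epsilon>)" and c2: "F t h < of_rat (q1 - \<epsilon>)"
        unfolding gact_def h_def by auto
      define r where "r = min (of_rat (q2 + \<epsilon>) - F u h) (of_rat (q1 - \<epsilon>) - F t h)"
      have r: "r > 0" using c1 c2 unfolding r_def by auto
      obtain h' where h': "h' \<in> G0" "d h h' < r"
        using dens[OF h r] by auto
      have h'c: "h' \<in> carrier G" using h' sub by auto
      from P2[OF h'(1) adm, of s m n] have
        "F u h' \<ge> of_rat (q2 + \<epsilon>) \<or> F t h' \<ge> of_rat (q1 - \<epsilon>)"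
        unfolding t_def u_def .
      moreover have "\<bar>F t h - F t h'\<bar> \<le> d h h'" "\<bar>F u h - F u h'\<bar> \<le> d h h'"
        using Lv h h'c by auto
      ultimately show False using h'(2) unfolding r_def by auto
    qed
  qed
  have A3: "\<forall>s. \<forall>g0\<in>G0. \<forall>q0 \<epsilon> :: rat.
        q0 \<in> {0<..<1} \<and> \<epsilon> \<in> {0<..<1} \<and> gact G g F s g0 < of_rat q0 \<longrightarrow>
          (\<exists>q1 q2 :: rat. \<exists>g1\<in>G0. \<exists>m n :: nat.
             0 < q2 \<and> q2 < q1 \<and> q1 < q0 \<and> q0 < 1 \<and> d g0 g1 < of_rat \<epsilon> \<and>
             gact G g F (s @ [q0, q1, q2, 1, of_nat m, of_nat n]) g1 < of_rat q2)"
  proof (intro allI ballI impI)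
    fix s g0 q0 \<epsilon>
    assume g0: "g0 \<in> G0" and H: "q0 \<in> {0<..<1::rat} \<and> \<epsilon> \<in> {0<..<1::rat} \<and> gact G g F s g0 < of_rat q0"
    define h where "h = g0 \<otimes>\<^bsub>G\<^esub> g"
    have g0c: "g0 \<in> carrier G" using g0 sub by auto
    have h: "h \<in> carrier G" using g0 sub mc h_def by auto
    have c: "F s h < of_rat q0" using H unfolding gact_def h_def by auto
    have e4: "(of_rat \<epsilon> :: real) / 4 > 0" using H by auto
    obtain h' where h': "h' \<in> G0" "d h h' < min (of_rat q0 - F s h) (of_rat \<epsilon> / 4)"
      using dens[OF h] c e4 by (metis min_def diff_gt_0_iff_gt)
    have h'c: "h' \<in> carrier G" using h' sub by auto
    have "\<bar>F s h - F s h'\<bar> \<le> d h h'" using Lv h h'c by auto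
    then have "F s h' < of_rat q0" using h'(2) by auto
    moreover have "\<epsilon>/4 \<in> {0<..<1}" using H by auto
    ultimately obtain q1 q2 g1' m n where
      Q: "g1' \<in> G0" "0 < q2" "q2 < q1" "q1 < q0" "q0 < 1" "d h' g1' < of_rat (\<epsilon>/4)"
         "F (s @ [q0, q1, q2, 1, of_nat m, of_nat n]) g1' < of_rat q2"
      using P3[OF h'(1), of q0 "\<epsilon>/4" s] H by blast
    define u where "u = s @ [q0, q1, q2, 1, of_nat m, of_nat n]"
    have g1'c: "g1' \<in> carrier G" using Q(1) sub by auto
    define k where "k = g1' \<otimes>\<^bsub>G\<^esub> inv\<^bsub>G\<^esub> g"
    have kc: "k \<in> carrier G" unfolding k_def using grp assms(6) g1'c
      by (simp add: group.inv_closed group.is_monoid monoid.m_closed)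
    have kg: "k \<otimes>\<^bsub>G\<^esub> g = g1'" unfolding k_def using grp assms(6) g1'c
      by (simp add: group.inv_closed monoid.m_assoc group.l_inv monoid.r_one group.is_monoid)
    have r: "min (of_rat q2 - F u g1') (of_rat \<epsilon> / 4) > 0" using Q(7) e4 unfolding u_def by auto
    obtain g1 where g1: "g1 \<in> G0" "d k g1 < min (of_rat q2 - F u g1') (of_rat \<epsilon> / 4)"
      using dens[OF kc r] by auto
    have g1c: "g1 \<in> carrier G" using g1 sub by auto
    have dd: "d g1' (g1 \<otimes>\<^bsub>G\<^esub> g) = d k g1" using RI[OF kc g1c] kg by simp
    have "\<bar>F u g1' - F u (g1 \<otimes>\<^bsub>G\<^esub> g)\<bar> \<le> d g1' (g1 \<otimes>\<^bsub>G\<^esub> g)"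
      using Lv g1'c mc[OF g1c] by auto
    then have fin: "F u (g1 \<otimes>\<^bsub>G\<^esub> g) < of_rat q2" using dd g1(2) by auto
    have a1: "d h h' < of_rat \<epsilon> / 4" "d k g1 < of_rat \<epsilon> / 4" using h'(2) g1(2) by auto
    have a2: "d h' g1' < of_rat \<epsilon> / 4" using Q(6) by (simp add: of_rat_divide)
    have "d h (g1 \<otimes>\<^bsub>G\<^esub> g) \<le> d h h' + d h' (g1 \<otimes>\<^bsub>G\<^esub> g)"
      using Metric_space.triangle[OF MS h h'c mc[OF g1c]] .
    also have "d h' (g1 \<otimes>\<^bsub>G\<^esub> g) \<le> d h' g1' + d g1' (g1 \<otimes>\<^bsub>G\<^esub> g)"
      using Metric_space.triangle[OF MS h'c g1'c mc[OF g1c]] .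
    finally have "d h (g1 \<otimes>\<^bsub>G\<^esub> g) < of_rat \<epsilon>"

      using a1 a2 dd e4 by linarith
    moreover have "d h (g1 \<otimes>\<^bsub>G\<^esub> g) = d g0 g1" unfolding h_def using RI[OF g0c g1c] .
    ultimately have dg: "d g0 g1 < of_rat \<epsilon>" by simp
    show "\<exists>q1 q2 :: rat. \<exists>g1\<in>G0. \<exists>m n :: nat.
             0 < q2 \<and> q2 < q1 \<and> q1 < q0 \<and> q0 < 1 \<and> d g0 g1 < of_rat \<epsilon> \<and>
             gact G g F (s @ [q0, q1, q2, 1, of_nat m, of_nat n]) g1 < of_rat q2"
      apply (rule exI[of _ q1], rule exI[of _ q2], rule bexI[of _ g1], rule exI[of _ m], rule exI[of _ n])
      using dg fin Q g1(1) unfolding gact_def u_def by auto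
  qed
  show ?thesis unfolding Xset_def using A0 A1 A2 A3 by blast
qed

end
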